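(* Let $\mathcal{X}$ be a finite-dimensional real Hilbert space with norm $\|\cdot\|$. Let $\mathbb{P}_{\mathrm{true}}$ be a probability distribution on $\mathcal{X}$ whose support $\mathcal{M}$ is a convex, compact set, and let $\mathbb{P}^1$ be a probability distribution on $\mathcal{X}$ with bounded support. Fix $\tau\in(0,\infty)$, $p\in[1,\infty)$, a nonzero $\mu=(\mu_1,\mu_2)\in\mathbb{R}^2_{\ge 0}$ with $\mu_1+\mu_2<2$, and a sequence $\{\gamma_k\}$ with $\gamma_k\in(0,1]$, $\gamma_k\to 0$, $\sum_k\gamma_k=\infty$. Let $\Gamma$ be the set of nonnegative $1$-Lipschitz functions $\mathcal{X}\to\mathbb{R}$ (the parametrized family $\{J_\theta\}_{\theta\in\mathcal{I}}$ over which training is done is assumed to equal $\Gamma$). Define inductively, for $k\in\mathbb{N}$: $\mathcal{A}_1(u)=u$; given $\mathbb{P}^k=(\mathcal{A}_k)_\#\mathbb{P}^1$, let $J_k\in\arg\min_{J\in\Gamma}\mathbb{E}_{u\sim\mathbb{P}_{\mathrm{true}}}[J(u)+\tau J(u)^p]-\mathbb{E}_{u^k\sim\mathbb{P}^k}[J(u^k)]$, $\beta_k=\mathbb{E}_{u^k\sim\mathbb{P}^k}[J_k(u^k)]-\mathbb{E}_{u\sim\mathbb{P}_{\mathrm{true}}}[J_k(u)]$, $g_k(u)=u-(\mu_1\beta_k+\mu_2J_k(u))\nabla J_k(u)$ if $J_k$ is differentiable at $u$ and $g_k(u)=u$ otherwise, and $\mathcal{A}_{k+1}(u)=\gamma_k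 u+(1-\gamma_k)g_k(\mathcal{A}_k(u))$. Assume that for all $k\in\mathbb{N}$, $(P_{\mathcal{M}})_\#\mathbb{P}^k=\mathbb{P}_{\mathrm{true}}$ up to a set of measure zero. Then for every $k\in\mathbb{N}$, $$\beta_k=\mathbb{E}_{u^k\sim\mathbb{P}^k}\big[d_{\mathcal{M}}(u^k)\big].$$
   Context: $P_{\mathcal{M}}(u)=\arg\min_{v\in\mathcal{M}}\|v-u\|$ is the metric projection onto $\mathcal{M}$ and $d_{\mathcal{M}}(u)=\inf_{v\in\mathcal{M}}\|v-u\|$ the distance function. For a map $T$ and probability measure $\mathbb{Q}$, $T_\#\mathbb{Q}[U]=\mathbb{Q}[T^{-1}(U)]$ denotes the push-forward. *)

theory Defs
  imports "HOL-Probability.Probability"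
begin

definition measure_support :: "'a::topological_space measure \<Rightarrow> 'a set" where
  "measure_support N = {x. \<forall>U. open U \<and> x \<in> U \<longrightarrow> emeasure N U > 0}"

definition metric_proj :: "'a::metric_space set \<Rightarrow> 'a \<Rightarrow> 'a" where
  "metric_proj S u = (SOME v. v \<in> S \<and> (\<forall>w\<in>S. dist v u \<le> dist w u))"

definition grad :: "('a::real_inner \<Rightarrow> real) \<Rightarrow> 'a \<Rightarrow> 'a" where
  "grad f u = (SOME g. (f has_derivative (\<lambda>h. g \<bullet> h)) (at u))"

definition Gamma_set :: "('a::metric_space \<Rightarrow> real) set" where
  "Gamma_set = {J. (\<forall>x. 0 \<le> J x) \<and> 1-lipschitz_on UNIV J}"

definition gstep :: "real \<Rightarrow> real \<Rightarrow> real \<Rightarrow> ('a::real_inner \<Rightarrow> real) \<Rightarrow> 'a \<Rightarrow> 'a" where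
  "gstep mu1 mu2 b J u =
     (if J differentiable (at u) then u - (mu1 * b + mu2 * J u) *\<^sub>R grad J u else u)"

end

theory Submission
  imports Defs
begin


lemma support_null:
  fixes N :: "'a::{second_countable_topology} measure"
  assumes sN: "sets N = sets borel"
  shows "- measure_support N \<in> null_sets N"
proof -
  obtain B :: "'a set set" where cB: "countable B" and tB: "topological_basis B"
    using ex_countable_basis by blast
  have eq: "- measure_support N = \<Union>{b\<in>B. emeasure N b = 0}"
  proof (intro equalityI subsetI)
    fix x assume "x \<in> - measure_support N"
    then obtain U where U: "open U" "x \<in> U" "\<not> emeasure N U > 0"
      unfolding measure_support_def by auto
    then have U0: "emeasure N U = 0" by (simp add: not_gr_zero)
    obtain W where W: "W \<in> B" "x \<in> W" "W \<subseteq> U"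
      using topological_basisE[OF tB U(1) U(2)] by blast
    have "open W" using tB W(1) topological_basis_open by blast
    have "emeasure N W \<le> emeasure N U"
      by (rule emeasure_mono) (use W(3) U(1) sN in auto)
    then have "emeasure N W = 0" using U0 by simp
    then show "x \<in> \<Union>{b\<in>B. emeasure N b = 0}" using W by blast
  next
    fix x assume "x \<in> \<Union>{b\<in>B. emeasure N b = 0}"
    then obtain W where W: "W \<in> B" "x \<in> W" "emeasure N W = 0" by blast
    have "open W" using tB W(1) topological_basis_open by blast
    then show "x \<in> - measure_support N" using W unfolding measure_support_def by auto
  qed
  have "(\<Union>b\<in>{b\<in>B. emeasure N b = 0}. b) \<in> null_sets N"
  proof (rule null_sets_UN')
    show "countable {b\<in>B. emeasure N b = 0}" using cB by simp
    fix b assume "b \<in> {b\<in>B. emeasure N b = 0}"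
    then have "open b" "emeasure N b = 0" using tB topological_basis_open by auto
    then show "(\<lambda>x. x) b \<in> null_sets N" using sN by (auto simp: null_sets_def)
  qed
  then show ?thesis using eq by simp
qed

lemma distr_meas:
  fixes g :: "'a \<Rightarrow> 'b::topological_space"
  assumes P: "prob_space Q" and d: "distr N borel g = Q"
  shows "g \<in> borel_measurable N"
proof -
  define \<mu> where "\<mu> = (\<lambda>A. emeasure N (g -` A \<inter> space N))"
  have sig: "sigma_sets UNIV (sets (borel::'b measure)) = sets borel"
    by (metis sets.sigma_sets_eq space_borel)
  have em: "emeasure Q = (\<lambda>B. if B \<in> sets borel \<and> measure_space UNIV (sets borel) \<mu> then \<mu> B else 0)"
  proof -
    have "emeasure Q = emeasure (distr N borel g)" using d by simp
    then show ?thesis unfolding distr_def \<mu>_def emeasure_measure_of_conv by (simp add: sig)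
  qed
  have sQ: "sets Q = sets borel" using d by auto
  have spQ: "space Q = UNIV" using sQ by (metis sets_eq_imp_space_eq space_borel)
  have "emeasure Q UNIV = 1" using P spQ prob_space.emeasure_space_1 by fastforce
  then have ms: "measure_space UNIV (sets borel) \<mu>" using em by (auto split: if_splits)
  have eq: "\<And>B. B \<in> sets borel \<Longrightarrow> emeasure Q B = \<mu> B" using em ms by simp
  show ?thesis
  proof (rule measurableI)
    fix x assume "x \<in> space N" then show "g x \<in> space borel" by simp
  next
    fix B :: "'b set" assume B: "B \<in> sets borel"
    then have B': "- B \<in> sets borel" by auto
    have "emeasure Q B + emeasure Q (- B) = emeasure Q (B \<union> - B)"
      using B B' sQ by (intro plus_emeasure) auto
    also have "\<dots> = 1" using \<open>emeasure Q UNIV = 1\<close> by simp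
    finally have s1: "emeasure Q B + emeasure Q (- B) = 1" .
    show "g -` B \<inter> space N \<in> sets N"
    proof (cases "emeasure Q B = 0")
      case False
      then have "\<mu> B \<noteq> 0" using eq B by simp
      then show ?thesis unfolding \<mu>_def using emeasure_notin_sets by blast
    next
      case True
      then have "emeasure Q (- B) \<noteq> 0" using s1 by simp
      then have "\<mu> (- B) \<noteq> 0" using eq B' by simp
      then have "g -` (- B) \<inter> space N \<in> sets N" unfolding \<mu>_def using emeasure_notin_sets by blast
      then have "space N - (g -` (- B) \<inter> space N) \<in> sets N" by auto
      moreover have "space N - (g -` (- B) \<inter> space N) = g -` B \<inter> space N" by auto
      ultimately show ?thesis by simp
    qed
  qed
qed



lemma grad_exists:
  fixes J :: "'a::euclidean_space \<Rightarrow> real"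
  assumes "J differentiable (at u)"
  shows "\<exists>g. (J has_derivative (\<lambda>h. g \<bullet> h)) (at u)"
proof -
  obtain F where hF: "(J has_derivative F) (at u)" using assms unfolding differentiable_def by blast
  have lin: "linear F" using hF has_derivative_linear by blast
  define g where "g = (\<Sum>i\<in>Basis. F i *\<^sub>R i)"
  have "F = (\<lambda>h. g \<bullet> h)"
  proof
    fix h :: 'a
    have "F h = F (\<Sum>i\<in>Basis. (h \<bullet> i) *\<^sub>R i)" by (simp add: euclidean_representation)
    also have "\<dots> = (\<Sum>i\<in>Basis. (h \<bullet> i) * F i)"
      using lin by (simp add: linear_sum linear_scale)
    also have "\<dots> = g \<bullet> h" unfolding g_def inner_sum_left inner_scaleR_left by (intro sum.cong refl) (metis inner_commute mult.commute)
    finally show "F h = g \<bullet> h" .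
  qed
  then show ?thesis using hF by blast
qed

lemma dir_lim:
  fixes J :: "'a::euclidean_space \<Rightarrow> real"
  assumes "(J has_derivative (\<lambda>h. g \<bullet> h)) (at u)"
  shows "(\<lambda>n. real (Suc n) * (J (u + (1 / real (Suc n)) *\<^sub>R i) - J u)) \<longlonglongrightarrow> g \<bullet> i"
proof -
  have d1: "((\<lambda>t::real. u + t *\<^sub>R i) has_derivative (\<lambda>t. t *\<^sub>R i)) (at 0)"
    by (auto intro!: derivative_eq_intros)
  have "((\<lambda>t. J (u + t *\<^sub>R i)) has_derivative (\<lambda>t. g \<bullet> (t *\<^sub>R i))) (at 0)"
    using has_derivative_compose[OF d1, of J "\<lambda>h. g \<bullet> h"] assms by simp
  then have "((\<lambda>t. J (u + t *\<^sub>R i)) has_field_derivative (g \<bullet> i)) (at 0)"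
    unfolding has_field_derivative_def by (simp add: mult.commute[of _ "g \<bullet> i"])
  then have L: "((\<lambda>t. (J (u + t *\<^sub>R i) - J (u + 0 *\<^sub>R i)) / (t - 0)) \<longlongrightarrow> g \<bullet> i) (at 0)"
    unfolding has_field_derivative_iff by simp
  have s: "filterlim (\<lambda>n. 1 / real (Suc n)) (at 0) sequentially"
  proof (rule filterlim_atI)
    show "((\<lambda>n. 1 / real (Suc n)) \<longlongrightarrow> 0) sequentially"
      using LIMSEQ_Suc[OF lim_inverse_n] by (simp add: divide_inverse)
    show "\<forall>\<^sub>F n in sequentially. 1 / real (Suc n) \<noteq> 0" by simp
  qed
  have "((\<lambda>n. (J (u + (1 / real (Suc n)) *\<^sub>R i) - J (u + 0 *\<^sub>R i)) / (1 / real (Suc n) - 0)) \<longlongrightarrow> g \<bullet> i) sequentially"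
    using filterlim_compose[OF L s] by (simp add: o_def)
  then show ?thesis by (simp add: field_simps)
qed

lemma gstep_meas:
  fixes J :: "'a::euclidean_space \<Rightarrow> real"
  assumes cJ: "continuous_on UNIV J"
  shows "gstep m1 m2 b J \<in> borel_measurable borel"
proof -
  define Q where "Q i n u = real (Suc n) * (J (u + (1 / real (Suc n)) *\<^sub>R i) - J u)" for i n u
  define G where "G u = (\<Sum>i\<in>Basis. lim (\<lambda>n. Q i n u) *\<^sub>R i)" for u
  have Jm[measurable]: "J \<in> borel_measurable borel" using cJ by (rule borel_measurable_continuous_onI)
  have Qm[measurable]: "Q i n \<in> borel_measurable borel" for i n
    unfolding Q_def by measurable
  have Gm[measurable]: "G \<in> borel_measurable borel" unfolding G_def by measurable
  have Gder: "(J has_derivative (\<lambda>h. G u \<bullet> h)) (at u)" and Ggrad: "grad J u = G u"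
    if diffu: "J differentiable (at u)" for u
  proof -
    obtain g where g: "(J has_derivative (\<lambda>h. g \<bullet> h)) (at u)" using grad_exists[OF diffu] by blast
    have "lim (\<lambda>n. Q i n u) = g \<bullet> i" for i
      using dir_lim[OF g, of i] unfolding Q_def by (rule limI)
    then have "G u = g" unfolding G_def by (simp add: euclidean_representation)
    then show der: "(J has_derivative (\<lambda>h. G u \<bullet> h)) (at u)" using g by simp
    have gr: "(J has_derivative (\<lambda>h. grad J u \<bullet> h)) (at u)"
      unfolding grad_def using g by (rule someI)
    have "(\<lambda>h. grad J u \<bullet> h) = (\<lambda>h. G u \<bullet> h)" using has_derivative_unique[OF gr der] .
    then have "grad J u \<bullet> (grad J u - G u) = G u \<bullet> (grad J u - G u)" by metis
    then have "(grad J u - G u) \<bullet> (grad J u - G u) = 0" by (simp add: inner_diff_left)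
    then show "grad J u = G u" by simp
  qed
  obtain DD :: "'a set" where cDD: "countable DD" and dDD: "\<And>X. open X \<Longrightarrow> X \<noteq> {} \<Longrightarrow> \<exists>d\<in>DD. d \<in> X"
    using countable_dense_exists by blast
  have DDne: "DD \<noteq> {}" using dDD[of UNIV] by auto
  define dd where "dd = from_nat_into DD"
  have rdd: "range dd = DD" unfolding dd_def using range_from_nat_into[OF DDne cDD] .
  define S where "S = {u. \<forall>e::nat. \<exists>d::nat. \<forall>m::nat. (0 < norm (dd m) \<and> norm (dd m) < 1 / real (Suc d)) \<longrightarrow>
      \<bar>J (u + dd m) - J u - G u \<bullet> dd m\<bar> \<le> norm (dd m) / real (Suc e)}"
  have Sm: "S \<in> sets borel" unfolding S_def by measurable
  have DS: "{u. J differentiable (at u)} = S"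
  proof (intro equalityI subsetI)
    fix u assume "u \<in> {u. J differentiable (at u)}"
    then have der: "(J has_derivative (\<lambda>h. G u \<bullet> h)) (at u)" using Gder by blast
    show "u \<in> S" unfolding S_def
    proof (intro CollectI allI)
      fix e :: nat
      have "(1::real) / real (Suc e) > 0" by simp
      then obtain d0 where d0: "d0 > 0" and hd: "\<And>y. norm (y - u) < d0 \<Longrightarrow>
          norm (J y - J u - G u \<bullet> (y - u)) \<le> 1 / real (Suc e) * norm (y - u)"
        using der unfolding has_derivative_at_alt by blast
      obtain d :: nat where "1 / real (Suc d) < d0"
        using d0 by (metis nat_approx_posE)
      show "\<exists>d. \<forall>m. 0 < norm (dd m) \<and> norm (dd m) < 1 / real (Suc d) \<longrightarrow>
          \<bar>J (u + dd m) - J u - G u \<bullet> dd m\<bar> \<le> norm (dd m) / real (Suc e)"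
      proof (intro exI allI impI)
        fix m assume "0 < norm (dd m) \<and> norm (dd m) < 1 / real (Suc d)"
        then have "norm ((u + dd m) - u) < d0" using \<open>1 / real (Suc d) < d0\<close> by simp
        from hd[OF this] show "\<bar>J (u + dd m) - J u - G u \<bullet> dd m\<bar> \<le> norm (dd m) / real (Suc e)" by simp
      qed
    qed
  next
    fix u assume uS: "u \<in> S"
    have "(J has_derivative (\<lambda>h. G u \<bullet> h)) (at u)"
      unfolding has_derivative_at_alt
    proof (intro conjI allI impI)
      show "bounded_linear (\<lambda>h. G u \<bullet> h)" by (rule bounded_linear_inner_right)
      fix \<epsilon> :: real assume "\<epsilon> > 0"
      then obtain e :: nat where e: "1 / real (Suc e) < \<epsilon>" by (metis nat_approx_posE)
      obtain d :: nat where hd: "\<And>m. 0 < norm (dd m) \<and> norm (dd m) < 1 / real (Suc d) \<Longrightarrow>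
          \<bar>J (u + dd m) - J u - G u \<bullet> dd m\<bar> \<le> norm (dd m) / real (Suc e)"
        using uS unfolding S_def by blast
      show "\<exists>d>0. \<forall>y. norm (y - u) < d \<longrightarrow> norm (J y - J u - G u \<bullet> (y - u)) \<le> \<epsilon> * norm (y - u)"
      proof (intro exI[of _ "1 / real (Suc d)"] conjI allI impI)
        show "0 < 1 / real (Suc d)" by simp
        fix y assume y: "norm (y - u) < 1 / real (Suc d)"
        define V where "V = {h. 0 < norm h} \<inter> {h. norm h < 1 / real (Suc d)} \<inter>
            {h. norm h / real (Suc e) < \<bar>J (u + h) - J u - G u \<bullet> h\<bar>}"
        have cc: "continuous_on UNIV (\<lambda>h. \<bar>J (u + h) - J u - G u \<bullet> h\<bar>)"
          by (intro continuous_intros continuous_on_compose2[OF cJ]) auto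
        have oV: "open V" unfolding V_def
          by (intro open_Int open_Collect_less cc continuous_intros) (simp_all add: continuous_on_const)
        have VD: "V \<inter> DD = {}"
        proof (rule ccontr)
          assume "V \<inter> DD \<noteq> {}"
          then obtain m where "dd m \<in> V" using rdd by blast
          then show False using hd[of m] unfolding V_def by auto
        qed
        have "y - u \<notin> V" using dDD[OF oV] VD by blast
        then have le: "\<bar>J y - J u - G u \<bullet> (y - u)\<bar> \<le> norm (y - u) / real (Suc e)" if "y \<noteq> u"
          using y that unfolding V_def by auto
        show "norm (J y - J u - G u \<bullet> (y - u)) \<le> \<epsilon> * norm (y - u)"
        proof (cases "y = u")
          case True then show ?thesis by simp
        next
          case False
          have "norm (y - u) / real (Suc e) = (1 / real (Suc e)) * norm (y - u)" by simp
          also have "\<dots> \<le> \<epsilon> * norm (y - u)" using e by (intro mult_right_mono) auto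
          finally have "norm (y - u) / real (Suc e) \<le> \<epsilon> * norm (y - u)" .
          then show ?thesis using le[OF False] by simp
        qed
      qed
    qed
    then show "u \<in> {u. J differentiable (at u)}" unfolding differentiable_def by blast
  qed
  have eq: "gstep m1 m2 b J = (\<lambda>u. if u \<in> S then u - (m1 * b + m2 * J u) *\<^sub>R G u else u)"
  proof
    fix u show "gstep m1 m2 b J u = (if u \<in> S then u - (m1 * b + m2 * J u) *\<^sub>R G u else u)"
      using DS Ggrad unfolding gstep_def by auto
  qed
  show ?thesis unfolding eq
    by (rule measurable_If_set) (use Sm in auto)
qed



theorem lemmaA2:
  fixes Ptrue P1 :: "'a::euclidean_space measure"
    and \<tau> p \<mu>1 \<mu>2 :: real
    and \<gamma> \<beta> :: "nat \<Rightarrow> real"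
    and A :: "nat \<Rightarrow> 'a \<Rightarrow> 'a"
    and J :: "nat \<Rightarrow> 'a \<Rightarrow> real"
    and M :: "'a set"
  assumes Ptrue_prob: "prob_space Ptrue" and Ptrue_sets: "sets Ptrue = sets borel"
    and P1_prob: "prob_space P1" and P1_sets: "sets P1 = sets borel"
    and M_def: "M = measure_support Ptrue"
    and M_convex: "convex M" and M_compact: "compact M"
    and P1_bdd: "bounded (measure_support P1)"
    and tau: "0 < \<tau>" and p: "1 \<le> p"
    and mu_nonneg: "0 \<le> \<mu>1" "0 \<le> \<mu>2" and mu_nz: "(\<mu>1, \<mu>2) \<noteq> (0, 0)"
    and mu_sum: "\<mu>1 + \<mu>2 < 2"
    and gamma_range: "\<And>k. 1 \<le> k \<Longrightarrow> 0 < \<gamma> k \<and> \<gamma> k \<le> 1"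
    and gamma_lim: "\<gamma> \<longlonglongrightarrow> 0" and gamma_div: "\<not> summable \<gamma>"
    and A1: "\<And>u. A 1 u = u"
    and J_mem: "\<And>k. 1 \<le> k \<Longrightarrow> J k \<in> Gamma_set"
    and J_min: "\<And>k K. 1 \<le> k \<Longrightarrow> K \<in> Gamma_set \<Longrightarrow>
        (\<integral>u. J k u + \<tau> * J k u powr p \<partial>Ptrue) - (\<integral>u. J k (A k u) \<partial>P1)
        \<le> (\<integral>u. K u + \<tau> * K u powr p \<partial>Ptrue) - (\<integral>u. K (A k u) \<partial>P1)"
    and beta_def: "\<And>k. 1 \<le> k \<Longrightarrow> \<beta> k = (\<integral>u. J k (A k u) \<partial>P1) - (\<integral>u. J k u \<partial>Ptrue)"
    and A_rec: "\<And>k u. 1 \<le> k \<Longrightarrow>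
        A (Suc k) u = \<gamma> k *\<^sub>R u + (1 - \<gamma> k) *\<^sub>R gstep \<mu>1 \<mu>2 (\<beta> k) (J k) (A k u)"
    and pushfwd: "\<And>k. 1 \<le> k \<Longrightarrow> distr P1 borel (\<lambda>u. metric_proj M (A k u)) = Ptrue"
  shows "\<forall>k\<ge>1. \<beta> k = (\<integral>u. infdist (A k u) M \<partial>P1)"

proof (intro allI impI)
  fix k :: nat assume k: "1 \<le> k"
  interpret T: prob_space Ptrue by (rule Ptrue_prob)
  interpret P: prob_space P1 by (rule P1_prob)
  have spT: "space Ptrue = UNIV" using Ptrue_sets by (metis sets_eq_imp_space_eq space_borel)
  have sp1: "space P1 = UNIV" using P1_sets by (metis sets_eq_imp_space_eq space_borel)
  have mT: "f \<in> borel_measurable Ptrue" if "f \<in> borel_measurable borel" for f :: "'a \<Rightarrow> real"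
    using that measurable_cong_sets[OF Ptrue_sets refl, of borel] by metis
  have m1: "f \<in> borel_measurable P1" if "f \<in> borel_measurable borel" for f :: "'a \<Rightarrow> real"
    using that measurable_cong_sets[OF P1_sets refl, of borel] by metis
  have nullM: "- M \<in> null_sets Ptrue" unfolding M_def by (rule support_null[OF Ptrue_sets])
  have AEM: "AE x in Ptrue. x \<in> M" using AE_not_in[OF nullM] by simp
  have Mne: "M \<noteq> {}"
  proof
    assume "M = {}"
    then have "emeasure Ptrue UNIV = 0" using nullM by auto
    then show False using T.emeasure_space_1 spT by simp
  qed
  have clM: "closed M" using M_compact compact_imp_closed by blast
  have proj: "metric_proj M u \<in> M \<and> infdist u M = dist u (metric_proj M u)" for u
  proof -
    obtain x where x: "x \<in> M" "\<And>y. y \<in> M \<Longrightarrow> dist u x \<le> dist u y"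
      using distance_attains_inf[OF clM Mne] by blast
    have ex: "\<exists>v. v \<in> M \<and> (\<forall>w\<in>M. dist v u \<le> dist w u)"
      using x by (metis dist_commute)
    define v where "v = metric_proj M u"
    have v: "v \<in> M \<and> (\<forall>w\<in>M. dist v u \<le> dist w u)"
      unfolding v_def metric_proj_def using someI_ex[OF ex] .
    obtain y where y: "y \<in> M" "infdist u M = dist u y"
      using infdist_attains_inf[OF clM Mne] by blast
    have "infdist u M \<le> dist u v" using v infdist_le by blast
    moreover have "dist u v \<le> dist u y" using v y by (metis dist_commute)
    ultimately show ?thesis using v y unfolding v_def by simp
  qed
  have Gam_cont: "continuous_on UNIV K" if "K \<in> Gamma_set" for K :: "'a \<Rightarrow> real"
    using that unfolding Gamma_set_def by (auto intro: lipschitz_on_continuous_on)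
  have Amb: "A j \<in> borel_measurable borel" if "1 \<le> j" for j
    using that
  proof (induction j rule: dec_induct)
    case base
    have "A 1 = (\<lambda>u. u)" using A1 by auto
    then show ?case by simp
  next
    case (step j)
    have eq: "A (Suc j) = (\<lambda>u. \<gamma> j *\<^sub>R u + (1 - \<gamma> j) *\<^sub>R gstep \<mu>1 \<mu>2 (\<beta> j) (J j) (A j u))"
      using A_rec step(1) by auto
    have gm: "gstep \<mu>1 \<mu>2 (\<beta> j) (J j) \<in> borel_measurable borel"
      by (rule gstep_meas[OF Gam_cont[OF J_mem[OF step(1)]]])
    have "(\<lambda>u. gstep \<mu>1 \<mu>2 (\<beta> j) (J j) (A j u)) \<in> borel_measurable borel"
      using measurable_comp[OF step(3) gm] by (simp add: o_def)
    then show ?case unfolding eq by measurable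
  qed
  have Akm[measurable]: "A k \<in> borel_measurable borel" using Amb[OF k] .
  have JG: "J k \<in> Gamma_set" using J_mem[OF k] .
  have Jnn: "\<And>x. 0 \<le> J k x" and Jlip: "1-lipschitz_on UNIV (J k)" using JG unfolding Gamma_set_def by auto
  have Jc: "continuous_on UNIV (J k)" using Gam_cont[OF JG] .
  have Jm[measurable]: "J k \<in> borel_measurable borel" using Jc by (rule borel_measurable_continuous_onI)
  have idc: "continuous_on UNIV (\<lambda>x. infdist x M)" by (intro continuous_intros)
  have idm[measurable]: "(\<lambda>x. infdist x M) \<in> borel_measurable borel"
    using idc by (rule borel_measurable_continuous_onI)
  define g where "g = (\<lambda>u. metric_proj M (A k u))"
  have gm: "g \<in> measurable P1 borel"
    unfolding g_def by (rule distr_meas[OF Ptrue_prob pushfwd[OF k]])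
  have gd: "distr P1 borel g = Ptrue" unfolding g_def using pushfwd[OF k] .
  obtain B where B: "\<And>x. x \<in> M \<Longrightarrow> J k x \<le> B"
    using continuous_attains_sup[OF M_compact Mne continuous_on_subset[OF Jc]] by blast
  have intJ: "integrable Ptrue (J k)"
    by (rule T.integrable_const_bound[where B=B]) (use AEM B Jnn in \<open>auto intro: mT\<close>)
  have intJp: "integrable Ptrue (\<lambda>x. J k x powr p)"
  proof (rule T.integrable_const_bound[where B="B powr p"])
    show "AE x in Ptrue. norm (J k x powr p) \<le> B powr p"
      using AEM
    proof eventually_elim
      case (elim x)
      then show ?case using B[OF elim] Jnn[of x] p by (simp add: powr_mono2)
    qed
    show "(\<lambda>x. J k x powr p) \<in> borel_measurable Ptrue" by (intro mT) measurable
  qed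
  define a where "a = (\<integral>x. J k x \<partial>Ptrue)"
  define b where "b = (\<integral>x. J k x powr p \<partial>Ptrue)"
  have a0: "0 \<le> a" unfolding a_def using Jnn by (simp add: integral_nonneg_AE)
  have b0: "0 \<le> b" unfolding b_def by (simp add: integral_nonneg_AE)
  have split: "(\<integral>u. J k u + \<tau> * J k u powr p \<partial>Ptrue) = a + \<tau> * b"
    unfolding a_def b_def using intJ intJp by simp
  have zeroK: "(\<integral>u. K u + \<tau> * K u powr p \<partial>Ptrue) = 0"
    if "\<And>x. x \<in> M \<Longrightarrow> K x = 0" for K :: "'a \<Rightarrow> real"
    by (rule integral_eq_zero_AE) (use AEM that in auto)
  have idlip: "dist (infdist x M) (infdist y M) \<le> dist x y" for x y
    using infdist_triangle[of x M y] infdist_triangle[of y M x]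
    by (simp add: dist_real_def dist_commute)
  have idG: "(\<lambda>x. infdist x M) \<in> Gamma_set"
    unfolding Gamma_set_def by (auto intro!: lipschitz_onI idlip infdist_nonneg)
  have minG: "(\<lambda>x. min (infdist x M) (real n)) \<in> Gamma_set" for n
    unfolding Gamma_set_def
  proof (auto intro!: lipschitz_onI infdist_nonneg)
    fix x y
    show "dist (min (infdist x M) (real n)) (min (infdist y M) (real n)) \<le> dist x y"
      using idlip[of x y] by (simp add: dist_real_def)
  qed
  have id0: "infdist x M = 0" if "x \<in> M" for x using that by simp
  define f where "f = (\<lambda>u. J k (A k u))"
  define h where "h = (\<lambda>u. infdist (A k u) M)"
  define q where "q = (\<lambda>u. J k (g u))"
  have fm: "f \<in> borel_measurable P1" unfolding f_def by (intro m1) measurable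
  have hm: "h \<in> borel_measurable P1" unfolding h_def by (intro m1) measurable
  have h0: "0 \<le> h u" for u unfolding h_def by (simp add: infdist_nonneg)
  have intq: "integrable P1 q"
    using intJ integrable_distr_eq[OF gm Jm] gd unfolding q_def by simp
  have intq_eq: "(\<integral>u. q u \<partial>P1) = a"
    unfolding q_def a_def using integral_distr[OF gm Jm] gd by simp
  have fqh: "f u \<le> q u + h u" for u
  proof -
    have "dist (J k (A k u)) (J k (g u)) \<le> 1 * dist (A k u) (g u)"
      by (rule lipschitz_onD[OF Jlip]) auto
    moreover have "dist (A k u) (g u) = h u" unfolding h_def g_def using proj by simp
    ultimately show ?thesis unfolding f_def q_def by (simp add: dist_real_def)
  qed
  have beta: "\<beta> k = (\<integral>u. f u \<partial>P1) - a" unfolding f_def a_def using beta_def[OF k] .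
  have I1: "a + \<tau> * b - (\<integral>u. f u \<partial>P1) \<le> - (\<integral>u. h u \<partial>P1)"
    using J_min[OF k idG] split zeroK[of "\<lambda>x. infdist x M"] id0 unfolding f_def h_def by simp
  have I2: "a + \<tau> * b - (\<integral>u. f u \<partial>P1) \<le> - (\<integral>u. min (h u) (real n) \<partial>P1)" for n
    using J_min[OF k minG[of n]] split zeroK[of "\<lambda>x. min (infdist x M) (real n)"] id0
    unfolding f_def h_def by simp
  have lower: "(\<integral>u. h u \<partial>P1) \<le> \<beta> k" using I1 beta tau b0
    by (smt (verit) mult_nonneg_nonneg)
  have upper: "\<beta> k \<le> (\<integral>u. h u \<partial>P1)"
  proof (cases "integrable P1 f")
    case False
    then have "(\<integral>u. f u \<partial>P1) = 0" by (rule not_integrable_integral_eq)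
    moreover have "0 \<le> (\<integral>u. h u \<partial>P1)" using h0 by (simp add: integral_nonneg_AE)
    ultimately show ?thesis using beta a0 by simp
  next
    case True
    define fn where "fn = (\<lambda>n u. min (h u) (real n))"
    have intfn: "integrable P1 (fn n)" for n
      by (rule P.integrable_const_bound[where B="real n"]) (use h0 hm in \<open>auto simp: fn_def\<close>)
    have inth: "integrable P1 h"
    proof (rule integrable_monotone_convergence[where f=fn])
      show "integrable P1 (fn n)" for n by (rule intfn)
      show "AE x in P1. mono (\<lambda>n. fn n x)"
        by (auto simp: fn_def mono_def intro: min.mono)
      show "AE x in P1. (\<lambda>n. fn n x) \<longlonglongrightarrow> h x"
      proof (intro AE_I2 tendsto_eventually)
        fix x
        obtain N :: nat where "h x \<le> real N" using real_arch_simple by blast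
        then show "\<forall>\<^sub>F n in sequentially. fn n x = h x"
          unfolding fn_def eventually_sequentially
          by (intro exI[of _ N]) (auto intro: order_trans)
      qed
      have inc: "incseq (\<lambda>n. integral\<^sup>L P1 (fn n))"
        by (auto simp: incseq_def fn_def intro!: integral_mono intfn[unfolded fn_def])
      have bdd: "bdd_above (range (\<lambda>n. integral\<^sup>L P1 (fn n)))"
        using I2 unfolding fn_def by (intro bdd_aboveI2[where M="(\<integral>u. f u \<partial>P1) - a - \<tau> * b"]) (smt (verit))
      show "(\<lambda>n. integral\<^sup>L P1 (fn n)) \<longlonglongrightarrow> (SUP n. integral\<^sup>L P1 (fn n))"
        by (rule LIMSEQ_incseq_SUP[OF bdd inc])
      show "h \<in> borel_measurable P1" by (rule hm)
    qed
    have "(\<integral>u. f u \<partial>P1) \<le> (\<integral>u. q u + h u \<partial>P1)"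
      by (rule integral_mono[OF True _ fqh]) (use intq inth in auto)
    also have "\<dots> = a + (\<integral>u. h u \<partial>P1)" using intq inth intq_eq by simp
    finally show ?thesis using beta by simp
  qed
  show "\<beta> k = (\<integral>u. infdist (A k u) M \<partial>P1)" using lower upper unfolding h_def by simp
qed

end
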